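(* Let $F$ be a finite field with $q$ elements and let $C\subseteq F^n$ be a balanced code with information length $d$. For a positive integer $n'$, let $C^{n'}=\{(\mathbf{c}_1,\dots,\mathbf{c}_{n'})\mid \mathbf{c}_i\in C\}\subseteq (F^n)^{n'}=F^{nn'}$. Then $C^{n'}$ is a balanced code of $F^{nn'}$ with information length $dn'$; in particular, if $0\le\delta\le 1-q^{-1}$, then $|(C^{n'})^{\le\delta}|\le q^{dn'h_q(\delta)}$, where $(C^{n'})^{\le\delta}$ is the set of codewords of $C^{n'}$ with relative weight at most $\delta$.
   Context: The relative weight of $\mathbf{a}\in F^N$ is $\mathrm{w}(\mathbf{a})/N$ where $\mathrm{w}$ is Hamming weight. For $I=\{1,\dots,N\}$ and a subset $I'=\{i_1<\dots<i_d\}$, the projection $F^I\to F^{I'}$ sends $(a_1,\dots,a_N)$ to $(a_{i_1},\dots,a_{i_d})$. A subset $C\subseteq F^N$ is a balanced code with information length $d$ if there exist subsets $I_1,\dots,I_s$ of $I$ (repetitions allowed), each of cardinality $d$, and an integer $t$ such that (i) every index $i\in I$ lies in exactly $t$ of the sets $I_j$; (ii) for each $j$, the projection $F^I\to F^{I_j}$ maps $C$ bijectively onto $F^{I_j}$. The $q$-ary entropy is $h_q(x)=x\log_q(q-1)-x\log_q x-(1-x)\log_q(1-x)$ with $0\log_q0=0$. *)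

theory Defs
  imports Complex_Main "HOL-Library.Cardinality"
begin

text \<open>Words of F^N are lists of length N over F; indices are 0,...,N-1.
  The projection onto an index subset I' is nths (keeps entries at positions
  in I', in increasing order).\<close>

definition hamming_weight :: "'a::zero list \<Rightarrow> nat" where
  "hamming_weight a = card {i. i < length a \<and> a ! i \<noteq> 0}"

definition relative_weight :: "'a::zero list \<Rightarrow> real" where
  "relative_weight a = real (hamming_weight a) / real (length a)"

definition words :: "nat \<Rightarrow> 'a list set" where
  "words N = {a. length a = N}"

definition balanced_code :: "nat \<Rightarrow> nat \<Rightarrow> 'a list set \<Rightarrow> bool" where
  "balanced_code N d C \<longleftrightarrow> C \<subseteq> words N \<and>
     (\<exists>(Is :: nat set list) (t :: nat). Is \<noteq> [] \<and>
        (\<forall>I\<in>set Is. I \<subseteq> {0..<N} \<and> card I = d) \<and>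
        (\<forall>i<N. length (filter (\<lambda>I. i \<in> I) Is) = t) \<and>
        (\<forall>I\<in>set Is. bij_betw (\<lambda>a. nths a I) C (words d)))"

definition entropy_q :: "real \<Rightarrow> real \<Rightarrow> real" where
  "entropy_q q x = x * log q (q - 1)
     - (if x = 0 then 0 else x * log q x)
     - (if x = 1 then 0 else (1 - x) * log q (1 - x))"

definition code_power :: "'a list set \<Rightarrow> nat \<Rightarrow> 'a list set" where
  "code_power C m = {concat cs | cs. length cs = m \<and> set cs \<subseteq> C}"

definition low_weight_part :: "'a::zero list set \<Rightarrow> real \<Rightarrow> 'a list set" where
  "low_weight_part C \<delta> = {c \<in> C. relative_weight c \<le> \<delta>}"

end

theory Submission
  imports Defs "HOL-Analysis.Analysis"
begin


lemma prod_list_nths: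
  "prod_list (map f (nths xs I)) = (\<Prod>i\<in>I \<inter> {..<length xs}. (f (xs!i) :: 'b::comm_monoid_mult))"
proof (induction xs arbitrary: I)
  case Nil then show ?case by simp
next
  case (Cons x xs)
  let ?J = "{j. Suc j \<in> I}"
  have r: "(\<Prod>i\<in>Suc ` (?J \<inter> {..<length xs}). f ((x#xs)!i)) = (\<Prod>i\<in>?J \<inter> {..<length xs}. f (xs!i))"
    by (subst prod.reindex) auto
  have eq: "I \<inter> {..<length (x#xs)} = (I \<inter> {0}) \<union> (Suc ` (?J \<inter> {..<length xs}))"
  proof (rule set_eqI)
    fix y show "y \<in> I \<inter> {..<length (x#xs)} \<longleftrightarrow> y \<in> (I \<inter> {0}) \<union> (Suc ` (?J \<inter> {..<length xs}))"
      by (cases y) auto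
  qed
  have "(\<Prod>i\<in>I \<inter> {..<length (x#xs)}. f ((x#xs)!i)) = 
     (\<Prod>i\<in>I \<inter> {0}. f ((x#xs)!i)) * (\<Prod>i\<in>?J \<inter> {..<length xs}. f (xs!i))"
    unfolding eq by (subst prod.union_disjoint) (auto simp: r)
  moreover have "(\<Prod>i\<in>I \<inter> {0}. f ((x#xs)!i)) = (if 0 \<in> I then f x else 1)"
    by (cases "0 \<in> I") (auto simp: Int_absorb1 Int_absorb2)
  ultimately show ?case using Cons.IH[of ?J] by (simp add: nths_Cons)
qed

lemma words_Suc: "words (Suc d) = (\<lambda>(x,y). x#y) ` (UNIV \<times> words d)"
  unfolding words_def by (auto simp: image_iff length_Suc_conv)

lemma finite_words: "finite (words d :: ('a::finite) list set)"
  unfolding words_def using finite_lists_length_eq[of "UNIV::'a set" d] by simp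

lemma sum_words: "(\<Sum>y\<in>words d. prod_list (map f y)) = (\<Sum>x\<in>(UNIV::'a::finite set). f x :: real) ^ d"
proof (induction d)
  case 0 then show ?case by (simp add: words_def)
next
  case (Suc d)
  have inj: "inj_on (\<lambda>(x,y). x#y) (UNIV \<times> (words d :: 'a list set))" by (auto simp: inj_on_def)
  have "(\<Sum>y\<in>words (Suc d). prod_list (map f y)) = (\<Sum>p\<in>UNIV \<times> words d. prod_list (map f ((\<lambda>(x,y). x#y) p)))"
    unfolding words_Suc by (rule sum.reindex[OF inj, unfolded comp_def])
  also have "\<dots> = (\<Sum>(x,y)\<in>UNIV \<times> words d. f x * prod_list (map f y))"
    by (rule sum.cong) auto
  also have "... = (\<Sum>x\<in>UNIV. f x) * (\<Sum>y\<in>words d. prod_list (map f y))"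
    by (simp add: sum_product sum.cartesian_product)
  finally show ?case using Suc by simp
qed

lemma prod_count:
  fixes h :: "nat \<Rightarrow> 'b::comm_monoid_mult" and s N :: nat and A :: "nat \<Rightarrow> nat set"
  shows "(\<forall>j<s. A j \<subseteq> {..<N}) \<Longrightarrow> (\<Prod>j<s. prod h (A j)) = (\<Prod>i<N. h i ^ card {j. j < s \<and> i \<in> A j})"
proof (induction s)
  case 0 then show ?case by simp
next
  case (Suc s)
  have c: "card {j. j < Suc s \<and> i \<in> A j} = card {j. j < s \<and> i \<in> A j} + (if i \<in> A s then 1 else 0)" for i
  proof -
    have "{j. j < Suc s \<and> i \<in> A j} = {j. j < s \<and> i \<in> A j} \<union> (if i \<in> A s then {s} else {})" by (auto simp: less_Suc_eq)
    then show ?thesis by auto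
  qed
  have p: "prod h (A s) = (\<Prod>i<N. h i ^ (if i \<in> A s then 1 else 0))"
  proof -
    have "prod h (A s) = prod h ({..<N} \<inter> A s)" using Suc.prems by (simp add: Int_absorb1)
    also have "\<dots> = (\<Prod>i<N. h i ^ (if i \<in> A s then 1 else 0))"
      by (subst prod.inter_restrict) (auto intro: prod.cong)
    finally show ?thesis .
  qed
  have "(\<Prod>j<Suc s. prod h (A j)) = (\<Prod>j<s. prod h (A j)) * prod h (A s)" by simp
  also have "\<dots> = (\<Prod>i<N. h i ^ card {j. j < s \<and> i \<in> A j} * h i ^ (if i \<in> A s then 1 else 0))"
    using Suc by (simp add: p prod.distrib)
  also have "\<dots> = (\<Prod>i<N. h i ^ card {j. j < Suc s \<and> i \<in> A j})"
    by (simp add: c power_add)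
  finally show ?case .
qed



lemma card_ge2: "CARD('a::{finite,field}) \<ge> 2"
proof -
  have "card {0::'a, 1} \<le> CARD('a)" by (rule card_mono) auto
  thus ?thesis by simp
qed

lemma balanced_bound:
  fixes C :: "('a::{finite,field}) list set" and \<delta> :: real
  assumes bal: "balanced_code N d C" and d0: "0 \<le> \<delta>" and d1: "\<delta> \<le> 1 - 1 / real CARD('a)"
  shows "real (card (low_weight_part C \<delta>)) \<le> real CARD('a) powr (real d * entropy_q (real CARD('a)) \<delta>)"
proof -
  define q where "q = real CARD('a)"
  have q2: "q \<ge> 2" using card_ge2[where 'a='a] unfolding q_def by linarith
  have CW: "C \<subseteq> words N" using bal unfolding balanced_code_def by simp
  have "\<exists>(Is :: nat set list) (t :: nat). Is \<noteq> [] \<and>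
        (\<forall>I\<in>set Is. I \<subseteq> {0..<N} \<and> card I = d) \<and>
        (\<forall>i<N. length (filter (\<lambda>I. i \<in> I) Is) = t) \<and>
        (\<forall>I\<in>set Is. bij_betw (\<lambda>a. nths a I) C (words d))"
    using bal unfolding balanced_code_def by (rule conjunct2)
  then obtain Is t where ne: "Is \<noteq> []"
    and Isub: "\<forall>I\<in>set Is. I \<subseteq> {0..<N} \<and> card I = d"
    and cnt: "\<forall>i<N. length (filter (\<lambda>I. i \<in> I) Is) = t"
    and bij: "\<forall>I\<in>set Is. bij_betw (\<lambda>a. nths a I) C (words d)"
    by (elim exE conjE)
  define s where "s = length Is"
  have s0: "s > 0" using ne by (simp add: s_def)
  have I0: "Is!0 \<in> set Is" using ne by simp
  have finC: "finite C" using bij I0 bij_betw_finite[of "\<lambda>a. nths a (Is!0)" C "words d"] finite_words by auto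
  have lowsub: "low_weight_part C \<delta> \<subseteq> C" by (auto simp: low_weight_part_def)
  have finL: "finite (low_weight_part C \<delta>)" using finC lowsub finite_subset by blast
  have lenC: "length c = N" if "c \<in> C" for c using CW that by (auto simp: words_def)
  have Isj: "Is!j \<in> set Is" if "j < s" for j using that by (simp add: s_def)
  show ?thesis
  proof (cases "N = 0")
    case True
    have "low_weight_part C \<delta> \<subseteq> {[]}" using CW True lowsub by (auto simp: words_def)
    hence "card (low_weight_part C \<delta>) \<le> card {[]::'a list}" by (intro card_mono) auto
    moreover have "d = 0" using Isub I0 True by auto
    ultimately show ?thesis using q2 by (simp add: q_def)
  next
    case Npos: False
    show ?thesis
    proof (cases "\<delta> = 0")
      case True
      have "low_weight_part C \<delta> \<subseteq> {replicate N 0}"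
      proof
        fix c assume c: "c \<in> low_weight_part C \<delta>"
        hence cC: "c \<in> C" and rw: "relative_weight c \<le> 0" using True by (auto simp: low_weight_part_def)
        have lc: "length c = N" using lenC cC by simp
        have "hamming_weight c = 0" using rw lc Npos
          by (simp add: relative_weight_def divide_le_0_iff)
        hence "{i. i < length c \<and> c ! i \<noteq> 0} = {}" unfolding hamming_weight_def by simp
        hence "\<forall>i<N. c!i = 0" using lc by auto
        thus "c \<in> {replicate N 0}" using lc by (auto intro: nth_equalityI)
      qed
      hence "card (low_weight_part C \<delta>) \<le> card {replicate N (0::'a)}" by (intro card_mono) auto
      thus ?thesis using q2 True by (simp add: q_def entropy_q_def)
    next
      case dpos0: False
      have dpos: "\<delta> > 0" using d0 dpos0 by simp
      have "1 / q > 0" using q2 by simp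
      moreover have d1q: "\<delta> \<le> 1 - 1/q" using d1 by (simp add: q_def)
      ultimately have dlt1: "\<delta> < 1" by linarith
      define a where "a = \<delta> / (q - 1)"
      define b where "b = 1 - \<delta>"
      define f where "f = (\<lambda>x::'a. if x = 0 then b else a)"
      have apos: "a > 0" using dpos q2 by (simp add: a_def)
      have bpos: "b > 0" using dlt1 by (simp add: b_def)
      have fpos: "f x > 0" for x using apos bpos by (simp add: f_def)
      have "\<delta> * q \<le> q - 1" using d1q q2 by (simp add: field_simps)
      hence "\<delta> \<le> (1 - \<delta>) * (q - 1)" by (simp add: algebra_simps)
      moreover have "q - 1 > 0" using q2 by simp
      ultimately have ab: "a \<le> b" unfolding a_def b_def by (simp add: pos_divide_le_eq)
      have sumf: "(\<Sum>x\<in>UNIV. f x) = 1"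
      proof -
        have "(\<Sum>x\<in>UNIV. f x) = f 0 + (\<Sum>x\<in>UNIV - {0}. f x)"
          by (simp add: sum.remove)
        also have "(\<Sum>x\<in>UNIV - {0}. f x) = (\<Sum>x\<in>UNIV - {0::'a}. a)"
          by (rule sum.cong) (auto simp: f_def)
        also have "\<dots> = real (CARD('a) - 1) * a" by (simp add: card_Diff_singleton)
        also have "real (CARD('a) - 1) = q - 1" using q2 by (simp add: q_def of_nat_diff)
        finally show ?thesis using q2 by (simp add: f_def a_def b_def)
      qed
      have Isub': "Is!j \<subseteq> {..<N}" if "j < s" for j
      proof -
        have "Is!j \<subseteq> {0..<N}" using Isub Isj[OF that] by blast
        thus ?thesis by auto
      qed
      have proj: "(\<Sum>c\<in>C. prod (\<lambda>i. f (c!i)) (Is!j)) = 1" if j: "j < s" for j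
      proof -
        have "(\<Sum>c\<in>C. prod (\<lambda>i. f (c!i)) (Is!j)) = (\<Sum>c\<in>C. prod_list (map f (nths c (Is!j))))"
        proof (rule sum.cong)
          fix c assume "c \<in> C"
          hence "Is!j \<inter> {..<length c} = Is!j" using lenC Isub'[OF j] by auto
          thus "prod (\<lambda>i. f (c!i)) (Is!j) = prod_list (map f (nths c (Is!j)))"
            by (simp add: prod_list_nths)
        qed simp
        also have "\<dots> = (\<Sum>y\<in>words d. prod_list (map f y))"
          using bij Isj[OF j] by (intro sum.reindex_bij_betw) auto
        also have "\<dots> = 1" by (simp add: sum_words sumf)
        finally show ?thesis .
      qed
      define G where "G c = (\<Prod>j<s. prod (\<lambda>i. f (c!i)) (Is!j))" for c
      have Gpos: "G c > 0" for c unfolding G_def using fpos by (intro prod_pos) auto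
      have amgm: "G c powr (1 / real s) \<le> (\<Sum>j<s. prod (\<lambda>i. f (c!i)) (Is!j) / real s)" for c
        using arith_geom_mean[of "{..<s}" "\<lambda>j. prod (\<lambda>i. f (c!i)) (Is!j)"] s0 fpos
        unfolding G_def by (auto intro: prod_nonneg less_imp_le)
      have sumG: "(\<Sum>c\<in>C. G c powr (1 / real s)) \<le> 1"
      proof -
        have "(\<Sum>c\<in>C. G c powr (1 / real s)) \<le> (\<Sum>c\<in>C. \<Sum>j<s. prod (\<lambda>i. f (c!i)) (Is!j) / real s)"
          by (rule sum_mono) (rule amgm)
        also have "\<dots> = (\<Sum>j<s. (\<Sum>c\<in>C. prod (\<lambda>i. f (c!i)) (Is!j)) / real s)"
          by (subst sum.swap) (simp add: sum_divide_distrib)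
        also have "\<dots> = (\<Sum>j<s. 1 / real s)" by (rule sum.cong) (auto simp: proj)
        also have "\<dots> = 1" using s0 by simp
        finally show ?thesis .
      qed
      have cnt': "card {j. j < s \<and> i \<in> Is!j} = t" if "i < N" for i
        using cnt that by (simp add: length_filter_conv_card s_def)
      have sd: "d * s = t * N"
      proof -
        have "(\<Prod>j<s. prod (\<lambda>_. 2::nat) (Is!j)) = (\<Prod>i<N. 2 ^ card {j. j < s \<and> i \<in> Is!j})"
          using Isub' by (intro prod_count) auto
        moreover have "(\<Prod>j<s. prod (\<lambda>_. 2::nat) (Is!j)) = 2 ^ (d * s)"
          using Isub Isj by (simp add: power_mult)
        moreover have "(\<Prod>i<N. (2::nat) ^ card {j. j < s \<and> i \<in> Is!j}) = 2 ^ (t * N)"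
          using cnt' by (simp add: power_mult)
        ultimately show ?thesis by simp
      qed
      define L where "L = \<delta> * ln a + (1 - \<delta>) * ln b"
      have lower: "exp (real d * L) \<le> G c powr (1 / real s)" if c: "c \<in> low_weight_part C \<delta>" for c
      proof -
        have cC: "c \<in> C" and rw: "relative_weight c \<le> \<delta>" using c by (auto simp: low_weight_part_def)
        have lc: "length c = N" using lenC cC by simp
        define S where "S = {i. i < N \<and> c!i \<noteq> 0}"
        define w where "w = card S"
        have wdef: "hamming_weight c = w" by (simp add: hamming_weight_def w_def S_def lc)
        have wle: "real w \<le> \<delta> * real N" using rw Npos
          by (simp add: relative_weight_def wdef lc divide_le_eq)
        have SN: "S \<subseteq> {..<N}" by (auto simp: S_def)
        have wN: "w \<le> N" using card_mono[OF _ SN] by (simp add: w_def)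
        define P where "P = (\<Prod>i<N. f (c!i))"
        have GP: "G c = P ^ t"
        proof -
          have "G c = (\<Prod>i<N. f (c!i) ^ card {j. j < s \<and> i \<in> Is!j})"
            unfolding G_def using Isub' by (intro prod_count) auto
          also have "\<dots> = (\<Prod>i<N. f (c!i) ^ t)" by (rule prod.cong) (auto simp: cnt')
          finally show ?thesis by (simp add: P_def prod_power_distrib)
        qed
        have Pab: "P = a ^ w * b ^ (N - w)"
        proof -
          have "P = (\<Prod>i<N. if c!i \<noteq> 0 then a else b)"
            unfolding P_def by (rule prod.cong) (auto simp: f_def)
          also have "\<dots> = (\<Prod>i\<in>{..<N} \<inter> {i. c!i \<noteq> 0}. a) * (\<Prod>i\<in>{..<N} \<inter> - {i. c!i \<noteq> 0}. b)"
            by (rule prod.If_cases) simp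
          also have "{..<N} \<inter> {i. c!i \<noteq> 0} = S" by (auto simp: S_def)
          also have "{..<N} \<inter> - {i. c!i \<noteq> 0} = {..<N} - S" by (auto simp: S_def)
          finally show ?thesis using SN by (simp add: w_def card_Diff_subset finite_subset)
        qed
        have lnP: "ln P = real w * ln a + (real N - real w) * ln b"
          using apos bpos wN by (simp add: Pab ln_mult ln_realpow of_nat_diff)
        have lnab: "ln a \<le> ln b" using apos ab by simp
        have "(real w - \<delta> * real N) * (ln a - ln b) \<ge> 0"
          using wle lnab by (intro mult_nonpos_nonpos) auto
        hence lnPL: "ln P \<ge> real N * L" unfolding lnP L_def by (simp add: algebra_simps)
        have Ppos: "P > 0" unfolding Pab using apos bpos by simp
        have "G c powr (1 / real s) = exp (real t * ln P / real s)"
          using Gpos[of c] Ppos by (simp add: powr_def GP ln_realpow)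
        moreover have "real t * ln P / real s \<ge> real d * L"
        proof -
          have "real t * ln P \<ge> real t * (real N * L)" using lnPL by (intro mult_left_mono) auto
          moreover have "real t * (real N * L) = real d * L * real s"
            using sd by (simp add: algebra_simps flip: of_nat_mult)
          ultimately show ?thesis using s0 by (simp add: le_divide_eq)
        qed
        ultimately show ?thesis by simp
      qed
      have "real (card (low_weight_part C \<delta>)) * exp (real d * L) = (\<Sum>c\<in>low_weight_part C \<delta>. exp (real d * L))"
        by simp
      also have "\<dots> \<le> (\<Sum>c\<in>low_weight_part C \<delta>. G c powr (1 / real s))"
        by (rule sum_mono) (rule lower)
      also have "\<dots> \<le> (\<Sum>c\<in>C. G c powr (1 / real s))"
        using finC lowsub by (intro sum_mono2) auto
      also have "\<dots> \<le> 1" by (rule sumG)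
      finally have cardle: "real (card (low_weight_part C \<delta>)) \<le> exp (- (real d * L))"
        by (simp add: exp_minus field_simps)
      have lnq: "ln q > 0" using q2 by simp
      have ent: "entropy_q q \<delta> * ln q = - L"
        using dpos dlt1 q2 lnq unfolding entropy_q_def L_def a_def b_def
        by (simp add: log_def ln_div field_simps)
      have "q powr (real d * entropy_q q \<delta>) = exp (- (real d * L))"
        using q2 ent by (simp add: powr_def algebra_simps)
      thus ?thesis using cardle by (simp add: q_def)
    qed
  qed
qed



definition U :: "nat \<Rightarrow> nat \<Rightarrow> nat set \<Rightarrow> nat set" where
  "U n k I = (\<lambda>(b,i). b*n+i) ` ({..<k} \<times> I)"

lemma nths_cong_lt:
  assumes "A \<inter> {..<length xs} = B \<inter> {..<length xs}"
  shows "nths xs A = nths xs B"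
proof -
  have "filter (\<lambda>p. snd p \<in> A) (zip xs [0..<length xs]) = filter (\<lambda>p. snd p \<in> B) (zip xs [0..<length xs])"
  proof (rule filter_cong[OF refl])
    fix p assume "p \<in> set (zip xs [0..<length xs])"
    hence "snd p \<in> set [0..<length xs]" by (metis prod.collapse set_zip_rightD)
    hence "snd p < length xs" by simp
    thus "(snd p \<in> A) = (snd p \<in> B)" using assms by blast
  qed
  thus ?thesis by (simp add: nths_def)
qed

lemma divmod_aux:
  fixes b i n :: nat assumes "i < n"
  shows "(b*n+i) div n = b" "(b*n+i) mod n = i"
  using assms by auto

lemma U_mem:
  assumes "I \<subseteq> {..<n}" "i < n*k"
  shows "i \<in> U n k I \<longleftrightarrow> i mod n \<in> I"
proof
  assume "i \<in> U n k I"
  then obtain b j where "b < k" "j \<in> I" "i = b*n+j" by (auto simp: U_def)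
  thus "i mod n \<in> I" using assms(1) divmod_aux[of j n b] by auto
next
  assume h: "i mod n \<in> I"
  have n0: "n > 0" using assms(2) by (cases n) auto
  have "i div n < k" using assms(2) n0 by (simp add: div_less_iff_less_mult mult.commute)
  moreover have "i = (i div n)*n + i mod n" by simp
  ultimately show "i \<in> U n k I" using h unfolding U_def by (auto intro!: image_eqI[where x="(i div n, i mod n)"])
qed

lemma U_sub:
  assumes "I \<subseteq> {..<n}" shows "U n k I \<subseteq> {0..<n*k}"
proof
  fix x assume "x \<in> U n k I"
  then obtain b j where b: "b < k" and j: "j \<in> I" and x: "x = b*n+j" by (auto simp: U_def)
  have "j < n" using j assms by auto
  hence "x < Suc b * n" using x by simp
  also have "\<dots> \<le> k * n" using b by (intro mult_le_mono1) simp
  finally show "x \<in> {0..<n*k}" by (simp add: mult.commute)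
qed

lemma U_card:
  assumes "I \<subseteq> {..<n}" shows "card (U n k I) = k * card I"
proof -
  have "inj_on (\<lambda>(b,i). b*n+i) ({..<k} \<times> I)"
  proof (rule inj_onI, clarsimp)
    fix b i b' i' assume "i \<in> I" "i' \<in> I" and e: "b*n+i = b'*n+i'"
    hence "i < n" "i' < n" using assms by auto
    thus "b = b' \<and> i = i'" using divmod_aux[of i n b] divmod_aux[of i' n b'] e by metis
  qed
  thus ?thesis unfolding U_def by (simp add: card_image card_cartesian_product)
qed

lemma U_shift:
  assumes "I \<subseteq> {..<n}"
  shows "{j. j + n \<in> U n (Suc k) I} = U n k I"
proof (rule set_eqI)
  fix j
  show "j \<in> {j. j + n \<in> U n (Suc k) I} \<longleftrightarrow> j \<in> U n k I"
  proof
    assume "j \<in> {j. j + n \<in> U n (Suc k) I}"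
    then obtain b i where b: "b < Suc k" and i: "i \<in> I" and e: "j + n = b*n+i" by (auto simp: U_def)
    have "i < n" using i assms by auto
    have "b \<noteq> 0"
    proof
      assume "b = 0" with e \<open>i < n\<close> show False by simp
    qed
    then obtain b' where b': "b = Suc b'" by (cases b) auto
    hence "j = b'*n + i" using e by simp
    thus "j \<in> U n k I" using b b' i unfolding U_def by auto
  next
    assume "j \<in> U n k I"
    then obtain b i where b: "b < k" and i: "i \<in> I" and e: "j = b*n+i" by (auto simp: U_def)
    hence "j + n = Suc b * n + i" by simp
    thus "j \<in> {j. j + n \<in> U n (Suc k) I}" using b i unfolding U_def
      by (auto intro!: image_eqI[where x="(Suc b, i)"])
  qed
qed

lemma U_low:
  assumes "I \<subseteq> {..<n}"
  shows "U n (Suc k) I \<inter> {..<n} = I \<inter> {..<n}"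
proof (rule set_eqI)
  fix x show "x \<in> U n (Suc k) I \<inter> {..<n} \<longleftrightarrow> x \<in> I \<inter> {..<n}"
  proof
    assume "x \<in> U n (Suc k) I \<inter> {..<n}"
    then obtain b i where i: "i \<in> I" and e: "x = b*n+i" and xn: "x < n" by (auto simp: U_def)
    have "b = 0" using e xn by (cases b) auto
    thus "x \<in> I \<inter> {..<n}" using e i xn by simp
  next
    assume "x \<in> I \<inter> {..<n}"
    thus "x \<in> U n (Suc k) I \<inter> {..<n}" unfolding U_def by (auto intro!: image_eqI[where x="(0, x)"])
  qed
qed

lemma nths_concat:
  assumes "I \<subseteq> {..<n}"
  shows "(\<forall>c\<in>set cs. length c = n) \<Longrightarrow> nths (concat cs) (U n (length cs) I) = concat (map (\<lambda>c. nths c I) cs)"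
proof (induction cs)
  case Nil then show ?case by simp
next
  case (Cons c cs)
  have lc: "length c = n" using Cons.prems by simp
  have "nths (concat (c#cs)) (U n (length (c#cs)) I) =
     nths c (U n (Suc (length cs)) I) @ nths (concat cs) {j. j + n \<in> U n (Suc (length cs)) I}"
    by (simp add: nths_append lc)
  also have "nths c (U n (Suc (length cs)) I) = nths c I"
    using U_low[OF assms] lc by (intro nths_cong_lt) simp
  also have "{j. j + n \<in> U n (Suc (length cs)) I} = U n (length cs) I" by (rule U_shift[OF assms])
  finally show ?case using Cons by simp
qed

lemma length_concat_const:
  "(\<forall>c\<in>set cs. length c = d) \<Longrightarrow> length (concat cs) = d * length cs"
  by (induction cs) auto

lemma concat_eq_const:
  "length xs = length ys \<Longrightarrow> (\<forall>x\<in>set xs. length x = d) \<Longrightarrow> (\<forall>y\<in>set ys. length y = d) \<Longrightarrow>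
   concat xs = concat ys \<Longrightarrow> xs = ys"
proof (induction xs arbitrary: ys)
  case Nil then show ?case by simp
next
  case (Cons x xs)
  then obtain y ys' where ys: "ys = y # ys'" by (cases ys) auto
  have "x @ concat xs = y @ concat ys'" using Cons.prems ys by simp
  moreover have "length x = length y" using Cons.prems ys by simp
  ultimately have "x = y" "concat xs = concat ys'" by auto
  thus ?case using Cons ys by auto
qed

lemma split_words:
  "y \<in> words (d*k) \<Longrightarrow> \<exists>ys. length ys = k \<and> set ys \<subseteq> words d \<and> concat ys = y"
proof (induction k arbitrary: y)
  case 0 then show ?case by (auto simp: words_def)
next
  case (Suc k)
  have ly: "length y = d + d*k" using Suc.prems by (simp add: words_def)
  have "drop d y \<in> words (d*k)" using ly by (simp add: words_def)
  then obtain ys where ys: "length ys = k" "set ys \<subseteq> words d" "concat ys = drop d y" using Suc.IH by blast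
  have "take d y \<in> words d" using ly by (simp add: words_def)
  thus ?case using ys by (intro exI[where x="take d y # ys"]) auto
qed

lemma power_bij:
  fixes C :: "'a list set"
  assumes CW: "C \<subseteq> words n" and In: "I \<subseteq> {..<n}" and bij: "bij_betw (\<lambda>a. nths a I) C (words d)"
  shows "bij_betw (\<lambda>a. nths a (U n k I)) (code_power C k) (words (d*k))"
proof -
  define p :: "'a list \<Rightarrow> 'a list" where "p = (\<lambda>a. nths a I)"
  have lenC: "\<forall>c\<in>set cs. length c = n" if "set cs \<subseteq> C" for cs using that CW by (auto simp: words_def)
  have pw: "p c \<in> words d" if "c \<in> C" for c using bij that unfolding p_def bij_betw_def by auto
  have pl: "\<forall>x\<in>set (map p cs). length x = d" if "set cs \<subseteq> C" for cs using that pw by (auto simp: words_def)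
  have key: "nths (concat cs) (U n k I) = concat (map p cs)" if "length cs = k" "set cs \<subseteq> C" for cs
    using nths_concat[OF In lenC[OF that(2)]] that unfolding p_def by simp
  have injp: "inj_on p C" using bij unfolding p_def bij_betw_def by simp
  show ?thesis unfolding bij_betw_def
  proof
    show "inj_on (\<lambda>a. nths a (U n k I)) (code_power C k)"
    proof (rule inj_onI)
      fix x y assume "x \<in> code_power C k" "y \<in> code_power C k" and e: "nths x (U n k I) = nths y (U n k I)"
      then obtain cs ds where cs: "x = concat cs" "length cs = k" "set cs \<subseteq> C"
        and ds: "y = concat ds" "length ds = k" "set ds \<subseteq> C" by (auto simp: code_power_def)
      have "concat (map p cs) = concat (map p ds)" using e key cs ds by simp
      hence "map p cs = map p ds" using pl[OF cs(3)] pl[OF ds(3)] cs(2) ds(2)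
        by (intro concat_eq_const[where d=d]) auto
      hence "cs = ds" using injp cs(3) ds(3) by (simp add: inj_on_map_eq_map inj_on_subset)
      thus "x = y" using cs ds by simp
    qed
  next
    show "(\<lambda>a. nths a (U n k I)) ` code_power C k = words (d * k)"
    proof
      show "(\<lambda>a. nths a (U n k I)) ` code_power C k \<subseteq> words (d * k)"
      proof
        fix z assume "z \<in> (\<lambda>a. nths a (U n k I)) ` code_power C k"
        then obtain cs where cs: "z = nths (concat cs) (U n k I)" "length cs = k" "set cs \<subseteq> C"
          by (auto simp: code_power_def)
        hence "z = concat (map p cs)" using key by simp
        thus "z \<in> words (d*k)" using length_concat_const[OF pl[OF cs(3)]] cs(2) by (simp add: words_def)
      qed
    next
      show "words (d * k) \<subseteq> (\<lambda>a. nths a (U n k I)) ` code_power C k"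
      proof
        fix y :: "'a list" assume "y \<in> words (d*k)"
        then obtain ys where ys: "length ys = k" "set ys \<subseteq> words d" "concat ys = y"
          using split_words by blast
        define cs where "cs = map (inv_into C p) ys"
        have pC: "p ` C = words d" using bij unfolding p_def bij_betw_def by simp
        have csC: "set cs \<subseteq> C" unfolding cs_def using ys(2) pC by (auto intro!: inv_into_into)
        have hinv: "p (inv_into C p x) = x" if "x \<in> set ys" for x
          using ys(2) pC that by (metis f_inv_into_f subsetD)
        have "map p cs = map (\<lambda>x. x) ys" unfolding cs_def map_map comp_def
          by (rule map_cong[OF refl]) (rule hinv)
        hence "map p cs = ys" by simp
        hence "y = nths (concat cs) (U n k I)" using key[of cs] csC ys by (simp add: cs_def)
        moreover have "concat cs \<in> code_power C k" using csC ys(1) unfolding code_power_def by (intro CollectI exI[where x=cs]) (simp add: cs_def)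
        ultimately show "y \<in> (\<lambda>a. nths a (U n k I)) ` code_power C k" by blast
      qed
    qed
  qed
qed



theorem corollary3p5:
  fixes C :: "('a::{finite, field}) list set"
    and n d n' :: nat and \<delta> :: real
  assumes "balanced_code n d C"
    and "n' > 0"
  shows "balanced_code (n * n') (d * n') (code_power C n') \<and>
    (0 \<le> \<delta> \<and> \<delta> \<le> 1 - 1 / real (CARD('a)) \<longrightarrow>
      real (card (low_weight_part (code_power C n') \<delta>))
        \<le> real (CARD('a)) powr (real (d * n') * entropy_q (real (CARD('a))) \<delta>))"
proof -
  have CW: "C \<subseteq> words n" using assms(1) unfolding balanced_code_def by simp
  have "\<exists>(Is :: nat set list) (t :: nat). Is \<noteq> [] \<and>
        (\<forall>I\<in>set Is. I \<subseteq> {0..<n} \<and> card I = d) \<and>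
        (\<forall>i<n. length (filter (\<lambda>I. i \<in> I) Is) = t) \<and>
        (\<forall>I\<in>set Is. bij_betw (\<lambda>a. nths a I) C (words d))"
    using assms(1) unfolding balanced_code_def by (rule conjunct2)
  then obtain Is t where ne: "Is \<noteq> []"
    and Isub: "\<forall>I\<in>set Is. I \<subseteq> {0..<n} \<and> card I = d"
    and cnt: "\<forall>i<n. length (filter (\<lambda>I. i \<in> I) Is) = t"
    and bij: "\<forall>I\<in>set Is. bij_betw (\<lambda>a. nths a I) C (words d)"
    by (elim exE conjE)
  have Isub': "J \<subseteq> {..<n}" if "J \<in> set Is" for J
  proof -
    have "J \<subseteq> {0..<n}" using Isub that by blast
    thus ?thesis by auto
  qed
  define Is' where "Is' = map (\<lambda>I. U n n' I) Is"
  have A: "code_power C n' \<subseteq> words (n*n')"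
  proof
    fix x assume "x \<in> code_power C n'"
    then obtain cs where cs: "x = concat cs" "length cs = n'" "set cs \<subseteq> C" by (auto simp: code_power_def)
    have "\<forall>c\<in>set cs. length c = n" using cs(3) CW by (auto simp: words_def)
    from length_concat_const[OF this] show "x \<in> words (n*n')" using cs by (simp add: words_def)
  qed
  have B1: "Is' \<noteq> []" using ne by (simp add: Is'_def)
  have B2: "\<forall>I\<in>set Is'. I \<subseteq> {0..<n*n'} \<and> card I = d*n'"
  proof
    fix I assume "I \<in> set Is'"
    then obtain J where J: "J \<in> set Is" "I = U n n' J" by (auto simp: Is'_def)
    have "card J = d" using Isub J(1) by blast
    thus "I \<subseteq> {0..<n*n'} \<and> card I = d*n'" using U_sub[OF Isub'[OF J(1)]] U_card[OF Isub'[OF J(1)]] J(2)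
      by simp
  qed
  have B3: "\<forall>i<n*n'. length (filter (\<lambda>I. i \<in> I) Is') = t"
  proof (intro allI impI)
    fix i assume i: "i < n*n'"
    have n0: "n > 0" using i by (cases n) auto
    have "filter (\<lambda>I. i \<in> I) Is' = map (\<lambda>I. U n n' I) (filter (\<lambda>J. i \<in> U n n' J) Is)"
      by (simp add: Is'_def filter_map comp_def)
    also have "filter (\<lambda>J. i \<in> U n n' J) Is = filter (\<lambda>J. i mod n \<in> J) Is"
      by (rule filter_cong[OF refl]) (simp add: U_mem[OF Isub' i])
    finally show "length (filter (\<lambda>I. i \<in> I) Is') = t" using cnt n0 by simp
  qed
  have B4: "\<forall>I\<in>set Is'. bij_betw (\<lambda>a. nths a I) (code_power C n') (words (d*n'))"
  proof
    fix I assume "I \<in> set Is'"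
    then obtain J where J: "J \<in> set Is" "I = U n n' J" by (auto simp: Is'_def)
    show "bij_betw (\<lambda>a. nths a I) (code_power C n') (words (d*n'))"
      using power_bij[OF CW Isub'[OF J(1)]] bij J by simp
  qed
  have bal: "balanced_code (n * n') (d * n') (code_power C n')"
    unfolding balanced_code_def
    apply (rule conjI, rule A)
    apply (rule exI[where x=Is'], rule exI[where x=t])
    using B1 B2 B3 B4 by (intro conjI)
  show ?thesis using bal balanced_bound[OF bal] by blast
qed

end
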